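(* Let $\lambda=(\lambda_1,\dots,\lambda_r)$ be a partition of $n$. Identify $\mathbb{C}[E_\lambda]$ with $\mathbb{C}[y_1,\dots,y_r]$, where $y_1$ is the common value of $x_i$ for $1\le i\le\lambda_1$, $y_2$ the common value of $x_i$ for $\lambda_1<i\le\lambda_1+\lambda_2$, etc. Then the pullback along the (surjective) composite map $E_\lambda\to X_\lambda\to X_\lambda/S_n$ identifies $\mathcal{O}(X_\lambda/S_n)$ with the subalgebra of $\mathbb{C}[y_1,\dots,y_r]$ generated by the Newton $\lambda$-sums $P_{i,\lambda}(y_1,\dots,y_r)=\lambda_1y_1^i+\cdots+\lambda_ry_r^i$, $i=1,2,\dots$
   Context: Work over $\mathbb{C}$. $E_\lambda\subset\mathbb{C}^n$ is the subspace defined by $x_1=\cdots=x_{\lambda_1}$, $x_{\lambda_1+1}=\cdots=x_{\lambda_1+\lambda_2}$, ..., $x_{n-\lambda_r+1}=\cdots=x_n$; $X_\lambda=S_n\cdot E_\lambda$ is the union of its $S_n$-translates, and $\mathcal{O}(X_\lambda/S_n)=\mathcal{O}(X_\lambda)^{S_n}$. *)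

theory Defs
  imports Complex_Main "HOL-Combinatorics.Permutations"
begin

text \<open>Points of C^n are functions nat => complex; only coordinates 0..n-1 matter
  (the paper's x_1..x_n are our x 0 .. x (n-1)). Similarly points of C^r.\<close>

inductive_set poly_fun :: "nat \<Rightarrow> ((nat \<Rightarrow> complex) \<Rightarrow> complex) set" for n :: nat where
  pf_const: "(\<lambda>x. c) \<in> poly_fun n"
| pf_var: "i < n \<Longrightarrow> (\<lambda>x. x i) \<in> poly_fun n"
| pf_add: "f \<in> poly_fun n \<Longrightarrow> g \<in> poly_fun n \<Longrightarrow> (\<lambda>x. f x + g x) \<in> poly_fun n"
| pf_mult: "f \<in> poly_fun n \<Longrightarrow> g \<in> poly_fun n \<Longrightarrow> (\<lambda>x. f x * g x) \<in> poly_fun n"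

definition is_partition :: "nat list \<Rightarrow> nat \<Rightarrow> bool" where
  "is_partition lam n \<longleftrightarrow> (\<forall>k\<in>set lam. 0 < k) \<and> sorted_wrt (\<ge>) lam \<and> sum_list lam = n"

definition blk :: "nat list \<Rightarrow> nat \<Rightarrow> nat" where
  "blk lam i = (LEAST j. i < sum_list (take (Suc j) lam))"

definition E_lam :: "nat \<Rightarrow> nat list \<Rightarrow> (nat \<Rightarrow> complex) set" where
  "E_lam n lam = {x. (\<forall>i\<ge>n. x i = 0) \<and>
     (\<forall>i<n. \<forall>j<n. blk lam i = blk lam j \<longrightarrow> x i = x j)}"

definition X_lam :: "nat \<Rightarrow> nat list \<Rightarrow> (nat \<Rightarrow> complex) set" where
  "X_lam n lam = {x \<circ> \<sigma> | x \<sigma>. x \<in> E_lam n lam \<and> \<sigma> permutes {..<n}}"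

definition Sn_invariant_on :: "nat \<Rightarrow> (nat \<Rightarrow> complex) set \<Rightarrow> ((nat \<Rightarrow> complex) \<Rightarrow> complex) \<Rightarrow> bool" where
  "Sn_invariant_on n X f \<longleftrightarrow> (\<forall>\<sigma>. \<sigma> permutes {..<n} \<longrightarrow> (\<forall>x\<in>X. f (x \<circ> \<sigma>) = f x))"

definition emb :: "nat list \<Rightarrow> (nat \<Rightarrow> complex) \<Rightarrow> (nat \<Rightarrow> complex)" where
  "emb lam y = (\<lambda>i. if i < sum_list lam then y (blk lam i) else 0)"

definition newton_lam :: "nat list \<Rightarrow> nat \<Rightarrow> (nat \<Rightarrow> complex) \<Rightarrow> complex" where
  "newton_lam lam i y = (\<Sum>j<length lam. of_nat (lam ! j) * y j ^ i)"

inductive_set newton_alg :: "nat list \<Rightarrow> ((nat \<Rightarrow> complex) \<Rightarrow> complex) set" for lam :: "nat list" where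
  na_const: "(\<lambda>y. c) \<in> newton_alg lam"
| na_gen: "1 \<le> i \<Longrightarrow> newton_lam lam i \<in> newton_alg lam"
| na_add: "f \<in> newton_alg lam \<Longrightarrow> g \<in> newton_alg lam \<Longrightarrow> (\<lambda>y. f y + g y) \<in> newton_alg lam"
| na_mult: "f \<in> newton_alg lam \<Longrightarrow> g \<in> newton_alg lam \<Longrightarrow> (\<lambda>y. f y * g y) \<in> newton_alg lam"

end

theory Submission imports Defs begin

inductive_set palg :: "('a \<Rightarrow> complex) set \<Rightarrow> ('a \<Rightarrow> complex) set" for G where
  pa_const: "(\<lambda>x. c) \<in> palg G"
| pa_gen: "g \<in> G \<Longrightarrow> g \<in> palg G"
| pa_add: "f \<in> palg G \<Longrightarrow> g \<in> palg G \<Longrightarrow> (\<lambda>x. f x + g x) \<in> palg G"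
| pa_mult: "f \<in> palg G \<Longrightarrow> g \<in> palg G \<Longrightarrow> (\<lambda>x. f x * g x) \<in> palg G"

lemma palg_subst:
  assumes "h \<in> palg G" "\<And>g. g \<in> G \<Longrightarrow> (\<lambda>x. g (\<phi> x)) \<in> palg H"
  shows "(\<lambda>x. h (\<phi> x)) \<in> palg H"
  using assms(1) by induction (auto intro: palg.intros assms(2))

lemma palg_trans:
  assumes "h \<in> palg G" "\<And>g. g \<in> G \<Longrightarrow> g \<in> palg H"
  shows "h \<in> palg H"
  using palg_subst[of h G id H] assms by simp

lemma palg_mono: "G \<subseteq> H \<Longrightarrow> h \<in> palg G \<Longrightarrow> h \<in> palg H"
  using palg_trans[of h G H] by (auto intro: pa_gen)

lemma palg_scale: "h \<in> palg G \<Longrightarrow> (\<lambda>x. c * h x) \<in> palg G"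
  by (rule pa_mult[OF pa_const])

lemma palg_diff: "f \<in> palg G \<Longrightarrow> g \<in> palg G \<Longrightarrow> (\<lambda>x. f x - g x) \<in> palg G"
  using pa_add[OF _ palg_scale[of g G "-1"], of f] by simp

lemma palg_div: "h \<in> palg G \<Longrightarrow> (\<lambda>x. h x / c) \<in> palg G"
  using palg_scale[of h G "1/c"] by simp

lemma palg_power: "h \<in> palg G \<Longrightarrow> (\<lambda>x. h x ^ k) \<in> palg G"
  by (induction k) (auto intro: palg.intros)

lemma palg_sum: "finite A \<Longrightarrow> (\<And>a. a \<in> A \<Longrightarrow> f a \<in> palg G) \<Longrightarrow> (\<lambda>x. \<Sum>a\<in>A. f a x) \<in> palg G"
  by (induction A rule: finite_induct) (auto intro: palg.intros)

lemma palg_invariant: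
  assumes "h \<in> palg G" "\<And>g x. g \<in> G \<Longrightarrow> g (\<phi> x) = g x"
  shows "h (\<phi> x) = h x"
  using assms(1) by induction (auto simp: assms(2))

definition reps :: "('a \<Rightarrow> complex) set \<Rightarrow> ('a \<Rightarrow> complex) \<Rightarrow> ('a \<Rightarrow> complex) set" where
  "reps Q v = {h. \<exists>D a. (\<forall>k. a k \<in> palg Q) \<and> (\<forall>x. h x = (\<Sum>k\<le>D. a k x * v x ^ k))}"

lemma sum_pad:
  assumes "D1 \<le> D"
  shows "(\<Sum>k\<le>D. (if k \<le> D1 then a k else (\<lambda>_. 0)) x * (w::complex) ^ k) = (\<Sum>k\<le>D1. a k x * w ^ k)"
proof -
  have "(\<Sum>k\<le>D. (if k \<le> D1 then a k else (\<lambda>_. 0)) x * w ^ k) = (\<Sum>k\<in>{..D} \<inter> {k. k \<le> D1}. a k x * w ^ k)"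
    by (subst sum.inter_restrict) (auto intro: sum.cong)
  also have "{..D} \<inter> {k. k \<le> D1} = {..D1}" using assms by auto
  finally show ?thesis .
qed

lemma reps_add: assumes "f \<in> reps Q v" "g \<in> reps Q v" shows "(\<lambda>x. f x + g x) \<in> reps Q v"
proof -
  obtain D1 a where a: "\<forall>k. a k \<in> palg Q" "\<forall>x. f x = (\<Sum>k\<le>D1. a k x * v x ^ k)"
    using assms(1) unfolding reps_def by blast
  obtain D2 b where b: "\<forall>k. b k \<in> palg Q" "\<forall>x. g x = (\<Sum>k\<le>D2. b k x * v x ^ k)"
    using assms(2) unfolding reps_def by blast
  define c where "c k = (\<lambda>x. (if k \<le> D1 then a k else (\<lambda>_. 0)) x + (if k \<le> D2 then b k else (\<lambda>_. 0)) x)" for k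
  have "\<forall>k. c k \<in> palg Q" unfolding c_def
    by (intro allI pa_add) (use a(1) b(1) in \<open>auto intro: pa_const\<close>)
  moreover have "\<forall>x. f x + g x = (\<Sum>k\<le>D1+D2. c k x * v x ^ k)"
    unfolding c_def distrib_right sum.distrib
    by (simp only: sum_pad a(2) b(2)) (simp add: sum_pad[of D1 "D1+D2"] sum_pad[of D2 "D1+D2"])
  ultimately show ?thesis unfolding reps_def by blast
qed

lemma reps_base: "h \<in> palg Q \<Longrightarrow> h \<in> reps Q v"
  unfolding reps_def by (rule CollectI, rule exI[of _ 0], rule exI[of _ "\<lambda>_. h"]) simp

lemma reps_v: "v \<in> reps Q v"
  unfolding reps_def
  by (rule CollectI, rule exI[of _ 1], rule exI[of _ "\<lambda>k. (\<lambda>_. if k = 1 then 1 else 0)"])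
     (auto intro: pa_const)

lemma reps_times_v: assumes "h \<in> reps Q v" shows "(\<lambda>x. v x * h x) \<in> reps Q v"
proof -
  obtain D a where a: "\<forall>k. a k \<in> palg Q" "\<forall>x. h x = (\<Sum>k\<le>D. a k x * v x ^ k)"
    using assms unfolding reps_def by blast
  define c where "c k = (case k of 0 \<Rightarrow> (\<lambda>_. 0) | Suc j \<Rightarrow> a j)" for k
  have "\<forall>k. c k \<in> palg Q" unfolding c_def using a(1) by (auto intro: pa_const split: nat.split)
  moreover have "\<forall>x. v x * h x = (\<Sum>k\<le>Suc D. c k x * v x ^ k)"
    unfolding sum.atMost_Suc_shift by (simp add: c_def a(2) sum_distrib_left algebra_simps)
  ultimately show ?thesis unfolding reps_def by blast
qed

lemma reps_scale: assumes "h \<in> reps Q v" "b \<in> palg Q" shows "(\<lambda>x. b x * h x) \<in> reps Q v"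
proof -
  obtain D a where a: "\<forall>k. a k \<in> palg Q" "\<forall>x. h x = (\<Sum>k\<le>D. a k x * v x ^ k)"
    using assms unfolding reps_def by blast
  have "\<forall>k. (\<lambda>x. b x * a k x) \<in> palg Q" using a(1) assms(2) by (auto intro: pa_mult)
  moreover have "\<forall>x. b x * h x = (\<Sum>k\<le>D. (\<lambda>x. b x * a k x) x * v x ^ k)"
    by (simp add: a(2) sum_distrib_left algebra_simps)
  ultimately show ?thesis unfolding reps_def
    by (intro CollectI exI[of _ D] exI[of _ "\<lambda>k x. b x * a k x"]) simp
qed

lemma reps_zero: "(\<lambda>_. 0) \<in> reps Q v"
  by (rule reps_base, rule pa_const)

lemma reps_sum: "finite A \<Longrightarrow> (\<And>i. i \<in> A \<Longrightarrow> f i \<in> reps Q v) \<Longrightarrow> (\<lambda>x. \<Sum>i\<in>A. f i x) \<in> reps Q v"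
  by (induction A rule: finite_induct) (auto intro: reps_add reps_zero)

lemma reps_vpow: "h \<in> reps Q v \<Longrightarrow> (\<lambda>x. v x ^ k * h x) \<in> reps Q v"
proof (induction k)
  case 0 then show ?case by simp
next
  case (Suc k)
  from reps_times_v[OF Suc.IH[OF Suc.prems]] show ?case by (simp add: mult.assoc)
qed

lemma reps_mult: assumes "f \<in> reps Q v" "g \<in> reps Q v" shows "(\<lambda>x. f x * g x) \<in> reps Q v"
proof -
  obtain D a where a: "\<forall>k. a k \<in> palg Q" "\<forall>x. f x = (\<Sum>k\<le>D. a k x * v x ^ k)"
    using assms(1) unfolding reps_def by blast
  have "(\<lambda>x. \<Sum>k\<le>D. a k x * (v x ^ k * g x)) \<in> reps Q v"
  proof (rule reps_sum)
    fix k show "(\<lambda>x. a k x * (v x ^ k * g x)) \<in> reps Q v"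
      using reps_scale[OF reps_vpow[OF assms(2), of k] a(1)[rule_format, of k]] .
  qed simp
  moreover have "(\<lambda>x. \<Sum>k\<le>D. a k x * (v x ^ k * g x)) = (\<lambda>x. f x * g x)"
    by (auto simp: a(2) sum_distrib_right sum_distrib_left algebra_simps)
  ultimately show ?thesis by simp
qed

lemma coeff_rep: assumes "h \<in> palg (insert v Q)"
  shows "\<exists>D a. (\<forall>k. a k \<in> palg Q) \<and> (\<forall>x. h x = (\<Sum>k\<le>D. a k x * v x ^ k))"
proof -
  have "h \<in> reps Q v" using assms
    by induction (auto intro: reps_add reps_mult reps_v reps_base pa_const pa_gen)
  then show ?thesis unfolding reps_def by blast
qed

definition vars :: "nat \<Rightarrow> ((nat \<Rightarrow> complex) \<Rightarrow> complex) set" where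
  "vars n = {(\<lambda>x. x i) | i. i < n}"
definition P :: "nat \<Rightarrow> nat \<Rightarrow> (nat \<Rightarrow> complex) \<Rightarrow> complex" where
  "P n k = (\<lambda>x. \<Sum>i<n. x i ^ k)"
definition psums :: "nat \<Rightarrow> ((nat \<Rightarrow> complex) \<Rightarrow> complex) set" where
  "psums n = {P n k | k. 1 \<le> k}"
definition avg :: "nat \<Rightarrow> ((nat \<Rightarrow> complex) \<Rightarrow> complex) \<Rightarrow> (nat \<Rightarrow> complex) \<Rightarrow> complex" where
  "avg n h = (\<lambda>x. (\<Sum>\<sigma>\<in>{\<sigma>. \<sigma> permutes {..<n}}. h (x \<circ> \<sigma>)) / fact n)"

lemma avg_palg: assumes "h \<in> palg (vars n)" shows "avg n h \<in> palg (vars n)"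
  unfolding avg_def
proof (rule palg_div, rule palg_sum)
  show "finite {\<sigma>. \<sigma> permutes {..<n}}" by (rule finite_permutations) simp
  fix \<sigma> assume "\<sigma> \<in> {\<sigma>. \<sigma> permutes {..<n}}"
  then have s: "\<sigma> permutes {..<n}" by simp
  show "(\<lambda>x. h (x \<circ> \<sigma>)) \<in> palg (vars n)"
  proof (rule palg_subst[OF assms])
    fix g assume "g \<in> vars n"
    then obtain i where i: "i < n" "g = (\<lambda>x. x i)" unfolding vars_def by blast
    have "\<sigma> i < n" using permutes_in_image[OF s, of i] i by simp
    then show "(\<lambda>x. g (x \<circ> \<sigma>)) \<in> palg (vars n)" using i
      by (auto simp: vars_def intro!: pa_gen)
  qed
qed

lemma avg_sym: assumes "\<tau> permutes {..<n}" shows "avg n h (x \<circ> \<tau>) = avg n h x"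
proof -
  have "(\<Sum>\<sigma>\<in>{\<sigma>. \<sigma> permutes {..<n}}. h (x \<circ> \<sigma>)) = (\<Sum>\<sigma>\<in>{\<sigma>. \<sigma> permutes {..<n}}. h (x \<circ> (\<tau> \<circ> \<sigma>)))"
    by (rule setum_permutations_compose_left[OF assms])
  then show ?thesis unfolding avg_def by (simp add: o_assoc)
qed

lemma avg_eq: assumes "\<And>\<sigma>. \<sigma> permutes {..<n} \<Longrightarrow> h (x \<circ> \<sigma>) = h x" shows "avg n h x = h x"
proof -
  have "(\<Sum>\<sigma>\<in>{\<sigma>. \<sigma> permutes {..<n}}. h (x \<circ> \<sigma>)) = (\<Sum>\<sigma>\<in>{\<sigma>. \<sigma> permutes {..<n}}. h x)"
    using assms by (intro sum.cong) auto
  also have "\<dots> = of_nat (fact n) * h x" using card_permutations[of "{..<n}" n] by simp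
  finally show ?thesis unfolding avg_def by simp
qed

lemma P_perm: assumes "\<tau> permutes {..<m}" shows "P m k (x \<circ> \<tau>) = P m k x"
  unfolding P_def using sum.reindex_bij_betw[OF permutes_imp_bij[OF assms], of "\<lambda>i. x i ^ k"] by simp

lemma ftsp:
  "f \<in> palg (vars n) \<Longrightarrow> (\<forall>\<sigma> x. \<sigma> permutes {..<n} \<longrightarrow> f (x \<circ> \<sigma>) = f x) \<Longrightarrow> f \<in> palg (psums n)"
proof (induction n arbitrary: f)
  case 0
  then show ?case using palg_mono[of "vars 0" "psums 0" f] by (simp add: vars_def)
next
  case (Suc n)
  have V: "vars (Suc n) = insert (\<lambda>x. x n) (vars n)" by (auto simp: vars_def less_Suc_eq)
  obtain D c where c: "\<forall>k. c k \<in> palg (vars n)" "\<forall>x. f x = (\<Sum>k\<le>D. c k x * x n ^ k)"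
    using coeff_rep[of f "\<lambda>x. x n" "vars n"] Suc.prems(1) unfolding V by auto
  define d where "d k = avg n (c k)" for k
  have dP: "d k \<in> palg (psums n)" for k
    unfolding d_def by (rule Suc.IH) (auto intro: avg_palg c(1)[rule_format] simp: avg_sym[unfolded comp_def])
  have feq: "f x = (\<Sum>k\<le>D. d k x * x n ^ k)" for x
  proof -
    have fs: "f (x \<circ> \<sigma>) = f x" if "\<sigma> permutes {..<n}" for \<sigma>
      using Suc.prems(2) permutes_subset[OF that, of "{..<Suc n}"] by (auto simp: comp_def)
    have fs2: "f (x \<circ> \<sigma>) = (\<Sum>k\<le>D. c k (x \<circ> \<sigma>) * x n ^ k)" if "\<sigma> permutes {..<n}" for \<sigma>
      using c(2) permutes_not_in[OF that, of n] by simp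
    have "f x = avg n f x" using avg_eq[of n f x] fs by simp
    also have "\<dots> = (\<Sum>\<sigma>\<in>{\<sigma>. \<sigma> permutes {..<n}}. \<Sum>k\<le>D. c k (x \<circ> \<sigma>) * x n ^ k) / fact n"
      unfolding avg_def using fs2 by (intro arg_cong[where f="\<lambda>z. z / _"] sum.cong) auto
    also have "\<dots> = (\<Sum>k\<le>D. (\<Sum>\<sigma>\<in>{\<sigma>. \<sigma> permutes {..<n}}. c k (x \<circ> \<sigma>)) * x n ^ k) / fact n"
      by (subst sum.swap) (simp add: sum_distrib_right)
    also have "\<dots> = (\<Sum>k\<le>D. d k x * x n ^ k)"
      unfolding d_def avg_def by (subst sum_divide_distrib) (simp add: field_simps)
    finally show ?thesis .
  qed
  let ?H = "insert (\<lambda>x. x n) (psums (Suc n))"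
  have psub: "g \<in> palg ?H" if gp: "g \<in> psums n" for g
  proof -
    obtain k where k: "g = P n k" "1 \<le> k" using gp unfolding psums_def by blast
    have "P n k = (\<lambda>x. P (Suc n) k x - x n ^ k)" unfolding P_def by auto
    moreover have "P (Suc n) k \<in> palg ?H" using k by (auto simp: psums_def intro!: pa_gen)
    moreover have "(\<lambda>x. x n ^ k) \<in> palg ?H" by (intro palg_power pa_gen) simp
    ultimately show ?thesis using k(1) by (simp add: palg_diff)
  qed
  have "(\<lambda>x. \<Sum>k\<le>D. d k x * x n ^ k) \<in> palg ?H"
    by (intro palg_sum pa_mult palg_power palg_trans[OF dP psub]) (auto intro: pa_gen)
  moreover have "f = (\<lambda>x. \<Sum>k\<le>D. d k x * x n ^ k)" by (rule ext) (rule feq)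
  ultimately have "f \<in> palg ?H" by simp
  then obtain E a where a: "\<forall>k. a k \<in> palg (psums (Suc n))" "\<forall>x. f x = (\<Sum>k\<le>E. a k x * x n ^ k)"
    using coeff_rep[of f "\<lambda>x. x n" "psums (Suc n)"] by auto
  have ainv: "a k (x \<circ> \<tau>) = a k x" if "\<tau> permutes {..<Suc n}" for k x \<tau>
    using palg_invariant[OF a(1)[rule_format, of k], of "\<lambda>x. x \<circ> \<tau>"] P_perm[OF that]
    by (auto simp: psums_def)
  have Pk: "P (Suc n) k \<in> palg (psums (Suc n))" for k
  proof (cases "k = 0")
    case True
    then have "P (Suc n) k = (\<lambda>x. of_nat (Suc n))" unfolding P_def by auto
    then show ?thesis by (simp add: pa_const)
  next
    case False then show ?thesis by (auto simp: psums_def intro!: pa_gen)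
  qed
  have main: "f x = (\<Sum>k\<le>E. a k x * P (Suc n) k x) / of_nat (Suc n)" for x
  proof -
    have t: "f x = (\<Sum>k\<le>E. a k x * x i ^ k)" if "i < Suc n" for i
    proof -
      have tp: "transpose i n permutes {..<Suc n}" using that by (intro permutes_swap_id) auto
      have "f x = f (x \<circ> transpose i n)" using Suc.prems(2) tp by (auto simp: comp_def)
      also have "\<dots> = (\<Sum>k\<le>E. a k x * x i ^ k)" using a(2) ainv[OF tp] by simp
      finally show ?thesis .
    qed
    have "of_nat (Suc n) * f x = (\<Sum>i<Suc n. f x)" by simp
    also have "\<dots> = (\<Sum>i<Suc n. \<Sum>k\<le>E. a k x * x i ^ k)" using t by (intro sum.cong) auto
    also have "\<dots> = (\<Sum>k\<le>E. a k x * P (Suc n) k x)"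
      unfolding P_def by (subst sum.swap) (simp only: sum_distrib_left)
    finally show ?thesis by (simp add: field_simps del: of_nat_Suc)
  qed
  have "(\<lambda>x. (\<Sum>k\<le>E. a k x * P (Suc n) k x) / of_nat (Suc n)) \<in> palg (psums (Suc n))"
    by (intro palg_div palg_sum pa_mult a(1)[rule_format] Pk) simp
  moreover have "f = (\<lambda>x. (\<Sum>k\<le>E. a k x * P (Suc n) k x) / of_nat (Suc n))" by (rule ext) (rule main)
  ultimately show ?case by simp
qed


lemma sum_split_add: "(\<Sum>i<a+b. (f::nat\<Rightarrow>complex) i) = (\<Sum>i<a. f i) + (\<Sum>i<b. f (a+i))"
  by (induction b) (simp_all add: add.assoc)

lemma blk_Cons:
  assumes "i < a + sum_list lam"
  shows "blk (a # lam) i = (if i < a then 0 else Suc (blk lam (i - a)))"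
proof (cases "i < a")
  case True
  then show ?thesis unfolding blk_def by (intro Least_equality) auto
next
  case False
  have ex: "i < sum_list (take (Suc (length lam)) (a # lam))" using assms by simp
  have "(LEAST j. i < sum_list (take (Suc j) (a # lam))) = Suc (LEAST m. i < sum_list (take (Suc (Suc m)) (a # lam)))"
    by (rule Least_Suc[of "\<lambda>j. i < sum_list (take (Suc j) (a # lam))", OF ex]) (use False in simp)
  also have "(\<lambda>m. i < sum_list (take (Suc (Suc m)) (a # lam))) = (\<lambda>m. i - a < sum_list (take (Suc m) lam))"
    using False by (auto simp: fun_eq_iff)
  finally show ?thesis using False unfolding blk_def by simp
qed

lemma blk_count:
  "(\<Sum>i<sum_list lam. g (blk lam i)) = (\<Sum>j<length lam. of_nat (lam ! j) * (g j :: complex))"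
proof (induction lam arbitrary: g)
  case Nil then show ?case by simp
next
  case (Cons a lam)
  have "(\<Sum>i<sum_list (a # lam). g (blk (a # lam) i)) = (\<Sum>i<a + sum_list lam. g (blk (a # lam) i))" by simp
  also have "\<dots> = (\<Sum>i<a. g (blk (a # lam) i)) + (\<Sum>i<sum_list lam. g (blk (a # lam) (a + i)))"
    by (rule sum_split_add)
  also have "(\<Sum>i<a. g (blk (a # lam) i)) = of_nat a * g 0"
    by (simp add: blk_Cons)
  also have "(\<Sum>i<sum_list lam. g (blk (a # lam) (a + i))) = (\<Sum>i<sum_list lam. g (Suc (blk lam i)))"
    by (intro sum.cong) (auto simp: blk_Cons)
  also have "\<dots> = (\<Sum>j<length lam. of_nat (lam ! j) * g (Suc j))" by (rule Cons.IH)
  finally show ?case unfolding length_Cons sum.lessThan_Suc_shift by simp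
qed

lemma poly_fun_palg: "f \<in> poly_fun n \<longleftrightarrow> f \<in> palg (vars n)"
proof
  assume "f \<in> poly_fun n" then show "f \<in> palg (vars n)"
    by induction (auto intro: palg.intros simp: vars_def)
next
  assume "f \<in> palg (vars n)" then show "f \<in> poly_fun n"
    by induction (auto intro: poly_fun.intros simp: vars_def)
qed

lemma palg_newton: "f \<in> palg {newton_lam lam i | i. 1 \<le> i} \<Longrightarrow> f \<in> newton_alg lam"
  by (induction rule: palg.induct) (auto intro: newton_alg.intros)

lemma P_emb: "sum_list lam = n \<Longrightarrow> (\<lambda>y. P n k (emb lam y)) = newton_lam lam k"
proof (rule ext)
  fix y assume "sum_list lam = n"
  show "P n k (emb lam y) = newton_lam lam k y"
    unfolding P_def emb_def newton_lam_def using blk_count[where lam=lam and g="\<lambda>j. y j ^ k"] \<open>sum_list lam = n\<close>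
    by simp
qed


theorem proposition2p2:
  fixes n :: nat and lam :: "nat list"
  assumes "is_partition lam n"
  shows "(\<forall>f g. f \<in> poly_fun n \<longrightarrow> g \<in> poly_fun n \<longrightarrow>
            Sn_invariant_on n (X_lam n lam) f \<longrightarrow> Sn_invariant_on n (X_lam n lam) g \<longrightarrow>
            f \<circ> emb lam = g \<circ> emb lam \<longrightarrow> (\<forall>x\<in>X_lam n lam. f x = g x))
       \<and> {f \<circ> emb lam | f. f \<in> poly_fun n \<and> Sn_invariant_on n (X_lam n lam) f}
           = newton_alg lam"
proof -
  have hn: "sum_list lam = n" using assms unfolding is_partition_def by simp
  have emb_E: "emb lam y \<in> E_lam n lam" for y
    unfolding E_lam_def emb_def using hn by auto
  have E_X: "x \<in> X_lam n lam" if "x \<in> E_lam n lam" for x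
    unfolding X_lam_def using that by (intro CollectI exI[of _ x] exI[of _ id]) simp
  have X_perm: "x \<circ> \<sigma> \<in> X_lam n lam" if xs: "x \<in> X_lam n lam" "\<sigma> permutes {..<n}" for x \<sigma>
  proof -
    obtain y \<rho> where y: "x = y \<circ> \<rho>" "y \<in> E_lam n lam" "\<rho> permutes {..<n}"
      using xs(1) unfolding X_lam_def by blast
    show ?thesis unfolding X_lam_def
      by (intro CollectI exI[of _ y] exI[of _ "\<rho> \<circ> \<sigma>"])
         (simp add: y o_assoc permutes_compose[OF xs(2) y(3)])
  qed
  have E_emb: "\<exists>z. x = emb lam z" if xE: "x \<in> E_lam n lam" for x
  proof -
    define z where "z j = x (SOME i. i < n \<and> blk lam i = j)" for j
    have "x = emb lam z"
    proof
      fix i show "x i = emb lam z i"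
      proof (cases "i < n")
        case True
        then have ex: "\<exists>i'. i' < n \<and> blk lam i' = blk lam i" by blast
        define i' where "i' = (SOME i'. i' < n \<and> blk lam i' = blk lam i)"
        from someI_ex[OF ex] have i': "i' < n" "blk lam i' = blk lam i" unfolding i'_def by blast+
        have "x i' = x i" using xE i' True unfolding E_lam_def by blast
        moreover have "emb lam z i = x i'" using True hn unfolding emb_def z_def i'_def by simp
        ultimately show ?thesis by simp
      next
        case False then show ?thesis using xE hn unfolding emb_def E_lam_def by auto
      qed
    qed
    then show ?thesis by blast
  qed
  have part1: "\<forall>x\<in>X_lam n lam. f x = g x"
    if fg: "Sn_invariant_on n (X_lam n lam) f" "Sn_invariant_on n (X_lam n lam) g"
       "f \<circ> emb lam = g \<circ> emb lam" for f g
  proof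
    fix x assume "x \<in> X_lam n lam"
    then obtain y \<sigma> where y: "x = y \<circ> \<sigma>" "y \<in> E_lam n lam" "\<sigma> permutes {..<n}"
      unfolding X_lam_def by blast
    obtain z where z: "y = emb lam z" using E_emb[OF y(2)] by blast
    have "f x = f y" using fg(1) y(1,3) E_X[OF y(2)] unfolding Sn_invariant_on_def by simp
    also have "\<dots> = g y" using fun_cong[OF fg(3), of z] z by simp
    also have "\<dots> = g x" using fg(2) y(1,3) E_X[OF y(2)] unfolding Sn_invariant_on_def by simp
    finally show "f x = g x" .
  qed
  have sub1: "f \<circ> emb lam \<in> newton_alg lam"
    if f: "f \<in> poly_fun n" "Sn_invariant_on n (X_lam n lam) f" for f
  proof -
    define F where "F = avg n f"
    have Fv: "F \<in> palg (vars n)" unfolding F_def using f(1) by (simp add: poly_fun_palg avg_palg)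
    have "F \<in> palg (psums n)" 
      by (rule ftsp[OF Fv]) (simp add: F_def avg_sym)
    then have "(\<lambda>y. F (emb lam y)) \<in> palg {newton_lam lam i | i. 1 \<le> i}"
    proof (rule palg_subst)
      fix g assume "g \<in> psums n"
      then obtain k where k: "g = P n k" "1 \<le> k" unfolding psums_def by blast
      show "(\<lambda>y. g (emb lam y)) \<in> palg {newton_lam lam i | i. 1 \<le> i}"
        using k P_emb[OF hn, of k] by (auto intro!: pa_gen)
    qed
    moreover have "f \<circ> emb lam = (\<lambda>y. F (emb lam y))"
    proof
      fix y
      have "F (emb lam y) = f (emb lam y)" unfolding F_def
        using f(2) E_X[OF emb_E[of y]] unfolding Sn_invariant_on_def by (intro avg_eq) blast
      then show "(f \<circ> emb lam) y = F (emb lam y)" by simp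
    qed
    ultimately show ?thesis by (simp add: palg_newton)
  qed
  have sub2: "h \<in> {f \<circ> emb lam | f. f \<in> poly_fun n \<and> Sn_invariant_on n (X_lam n lam) f}"
    if "h \<in> newton_alg lam" for h
    using that
  proof induction
    case (na_const c)
    show ?case
      by (intro CollectI exI[of _ "\<lambda>x. c"]) (auto simp: Sn_invariant_on_def intro: pf_const)
  next
    case (na_gen i)
    have "P n i \<in> poly_fun n" unfolding poly_fun_palg P_def
      by (intro palg_sum palg_power pa_gen) (auto simp: vars_def)
    moreover have "Sn_invariant_on n (X_lam n lam) (P n i)"
      unfolding Sn_invariant_on_def using P_perm by simp
    moreover have "newton_lam lam i = P n i \<circ> emb lam"
      using P_emb[OF hn, of i] by (simp add: comp_def)
    ultimately show ?case by (intro CollectI exI[of _ "P n i"]) simp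
  next
    case (na_add f g)
    then obtain f1 g1 where "f = f1 \<circ> emb lam" "f1 \<in> poly_fun n" "Sn_invariant_on n (X_lam n lam) f1"
      "g = g1 \<circ> emb lam" "g1 \<in> poly_fun n" "Sn_invariant_on n (X_lam n lam) g1" by blast
    then show ?case
      by (intro CollectI exI[of _ "\<lambda>x. f1 x + g1 x"]) (auto simp: Sn_invariant_on_def intro: pf_add)
  next
    case (na_mult f g)
    then obtain f1 g1 where "f = f1 \<circ> emb lam" "f1 \<in> poly_fun n" "Sn_invariant_on n (X_lam n lam) f1"
      "g = g1 \<circ> emb lam" "g1 \<in> poly_fun n" "Sn_invariant_on n (X_lam n lam) g1" by blast
    then show ?case
      by (intro CollectI exI[of _ "\<lambda>x. f1 x * g1 x"]) (auto simp: Sn_invariant_on_def intro: pf_mult)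
  qed
  have "{f \<circ> emb lam | f. f \<in> poly_fun n \<and> Sn_invariant_on n (X_lam n lam) f} = newton_alg lam"
  proof (rule set_eqI, rule iffI)
    fix h assume "h \<in> {f \<circ> emb lam | f. f \<in> poly_fun n \<and> Sn_invariant_on n (X_lam n lam) f}"
    then obtain f where "h = f \<circ> emb lam" "f \<in> poly_fun n" "Sn_invariant_on n (X_lam n lam) f" by blast
    then show "h \<in> newton_alg lam" using sub1 by simp
  qed (rule sub2)
  then show ?thesis using part1 by simp
qed

end
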